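(* Let $G$ and $H$ be groups such that the power quandles $\mathrm{Pq}(G)$ and $\mathrm{Pq}(H)$ are isomorphic. Then the central quotients are isomorphic as groups: $G/\mathrm{Z}(G)\cong H/\mathrm{Z}(H)$.
   Context: A power quandle $(P,\rhd,\pi,e)$ consists of a set $P$, a binary operation $\rhd$, an element $e$, and maps $\pi^n\colon P\to P$ ($n\in\mathbb{Z}$) satisfying: each $\lambda_a\colon b\mapsto a\rhd b$ is bijective and $a\rhd(b\rhd c)=(a\rhd b)\rhd(a\rhd c)$; $a\rhd a=a$; $e\rhd b=b$, $a\rhd e=e$; $\pi^1=\mathrm{id}$, $\pi^m\circ\pi^n=\pi^{mn}$; $\pi^0(a)=e$; $a\rhd\pi^n(b)=\pi^n(a\rhd b)$; $\pi^n(a)\rhd b=\lambda_a^n(b)$. An isomorphism of power quandles is a bijection preserving $\rhd$, all $\pi^n$ and $e$. For a group $G$, $\mathrm{Pq}(G)$ is the power quandle on the underlying set of $G$ with $a\rhd b=aba^{-1}$, $\pi^n(a)=a^n$, and $e$ the identity element. $\mathrm{Z}(G)$ denotes the center of $G$. *)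

theory Defs
  imports "HOL-Algebra.Algebra"
begin

definition group_center :: "('a, 'b) monoid_scheme \<Rightarrow> 'a set" where
  "group_center G = {z \<in> carrier G. \<forall>g \<in> carrier G. z \<otimes>\<^bsub>G\<^esub> g = g \<otimes>\<^bsub>G\<^esub> z}"

definition pq_op :: "('a, 'b) monoid_scheme \<Rightarrow> 'a \<Rightarrow> 'a \<Rightarrow> 'a" where
  "pq_op G a b = a \<otimes>\<^bsub>G\<^esub> b \<otimes>\<^bsub>G\<^esub> inv\<^bsub>G\<^esub> a"

definition pq_pow :: "('a, 'b) monoid_scheme \<Rightarrow> int \<Rightarrow> 'a \<Rightarrow> 'a" where
  "pq_pow G n a = a [^]\<^bsub>G\<^esub> n"

definition pq_iso :: "('a, 'c) monoid_scheme \<Rightarrow> ('b, 'd) monoid_scheme \<Rightarrow> ('a \<Rightarrow> 'b) \<Rightarrow> bool" where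
  "pq_iso G H f \<longleftrightarrow>
     bij_betw f (carrier G) (carrier H) \<and>
     (\<forall>a \<in> carrier G. \<forall>b \<in> carrier G. f (pq_op G a b) = pq_op H (f a) (f b)) \<and>
     (\<forall>n::int. \<forall>a \<in> carrier G. f (pq_pow G n a) = pq_pow H n (f a)) \<and>
     f \<one>\<^bsub>G\<^esub> = \<one>\<^bsub>H\<^esub>"

end

theory Submission
  imports Defs
begin

lemma (in group) center_subgroup: "subgroup (group_center G) G"
proof (rule subgroupI)
  show "group_center G \<subseteq> carrier G" by (auto simp: group_center_def)
  show "group_center G \<noteq> {}" by (auto simp: group_center_def intro!: exI[of _ \<one>])
next
  fix a assume a: "a \<in> group_center G"
  hence ac: "a \<in> carrier G" and c: "\<And>g. g \<in> carrier G \<Longrightarrow> a \<otimes> g = g \<otimes> a"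
    by (auto simp: group_center_def)
  have "inv a \<otimes> g = g \<otimes> inv a" if g: "g \<in> carrier G" for g
  proof -
    have "inv a \<otimes> g = inv a \<otimes> (g \<otimes> a) \<otimes> inv a" using ac g by (simp add: m_assoc)
    also have "\<dots> = inv a \<otimes> (a \<otimes> g) \<otimes> inv a" using c g by simp
    also have "\<dots> = g \<otimes> inv a" using ac g by (simp add: m_assoc[symmetric])
    finally show ?thesis .
  qed
  thus "inv a \<in> group_center G" using ac by (auto simp: group_center_def)
next
  fix a b assume "a \<in> group_center G" "b \<in> group_center G"
  hence ac: "a \<in> carrier G" "b \<in> carrier G" and
    c: "\<And>g. g \<in> carrier G \<Longrightarrow> a \<otimes> g = g \<otimes> a"
    "\<And>g. g \<in> carrier G \<Longrightarrow> b \<otimes> g = g \<otimes> b"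
    by (auto simp: group_center_def)
  have "a \<otimes> b \<otimes> g = g \<otimes> (a \<otimes> b)" if g: "g \<in> carrier G" for g
  proof -
    have "a \<otimes> b \<otimes> g = a \<otimes> (g \<otimes> b)" using ac g c(2) by (simp add: m_assoc)
    also have "\<dots> = (a \<otimes> g) \<otimes> b" using ac g by (simp add: m_assoc)
    also have "\<dots> = g \<otimes> (a \<otimes> b)" using ac g c(1) by (simp add: m_assoc)
    finally show ?thesis .
  qed
  thus "a \<otimes> b \<in> group_center G" using ac by (auto simp: group_center_def)
qed

lemma (in group) center_normal: "group_center G \<lhd> G"
proof -
  have "x \<otimes> h \<otimes> inv x \<in> group_center G" if "x \<in> carrier G" "h \<in> group_center G" for x h
  proof -
    have hc: "h \<in> carrier G" and "x \<otimes> h = h \<otimes> x" using that by (auto simp: group_center_def)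
    hence "x \<otimes> h \<otimes> inv x = h" using that(1) by (simp add: m_assoc)
    thus ?thesis using that by simp
  qed
  thus ?thesis using normal_inv_iff center_subgroup by blast
qed

lemma (in group) conj_center:
  assumes x: "x \<in> carrier G" and y: "y \<in> carrier G"
    and e: "\<And>h. h \<in> carrier G \<Longrightarrow> x \<otimes> h \<otimes> inv x = y \<otimes> h \<otimes> inv y"
  shows "x \<otimes> inv y \<in> group_center G"
proof -
  have "x \<otimes> inv y \<otimes> h = h \<otimes> (x \<otimes> inv y)" if h: "h \<in> carrier G" for h
  proof -
    define k where "k = inv y \<otimes> h \<otimes> y"
    have k: "k \<in> carrier G" using x y h by (simp add: k_def)
    have "y \<otimes> k \<otimes> inv y = h" using x y h unfolding k_def by (simp add: m_assoc) (simp add: m_assoc[symmetric])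
    hence hk: "x \<otimes> k \<otimes> inv x = h" using e[OF k] by simp
    have "x \<otimes> inv y \<otimes> h = x \<otimes> k \<otimes> inv y" using x y h unfolding k_def by (simp add: m_assoc)
    also have "\<dots> = (x \<otimes> k \<otimes> inv x) \<otimes> (x \<otimes> inv y)" using x y k by (simp add: m_assoc) (simp add: m_assoc[symmetric])
    also have "\<dots> = h \<otimes> (x \<otimes> inv y)" using hk by simp
    finally show ?thesis .
  qed
  thus ?thesis using x y by (auto simp: group_center_def)
qed

theorem mainTheorem4:
  fixes G :: "('a, 'c) monoid_scheme" and H :: "('b, 'd) monoid_scheme"
  assumes "group G" and "group H"
    and "\<exists>f. pq_iso G H f"
  shows "(G Mod group_center G) \<cong> (H Mod group_center H)"
proof -
  interpret G: group G by fact
  interpret H: group H by fact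
  obtain f where f: "pq_iso G H f" using assms(3) by blast
  have bij: "bij_betw f (carrier G) (carrier H)" using f by (simp add: pq_iso_def)
  have fc: "\<And>a. a \<in> carrier G \<Longrightarrow> f a \<in> carrier H" using bij by (auto simp: bij_betw_def)
  have im: "f ` carrier G = carrier H" using bij by (simp add: bij_betw_def)
  have inj: "inj_on f (carrier G)" using bij by (simp add: bij_betw_def)
  have fop: "\<And>a b. a \<in> carrier G \<Longrightarrow> b \<in> carrier G \<Longrightarrow>
      f (a \<otimes>\<^bsub>G\<^esub> b \<otimes>\<^bsub>G\<^esub> inv\<^bsub>G\<^esub> a) = f a \<otimes>\<^bsub>H\<^esub> f b \<otimes>\<^bsub>H\<^esub> inv\<^bsub>H\<^esub> f a"
    using f by (simp add: pq_iso_def pq_op_def)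
  let ?ZG = "group_center G" and ?ZH = "group_center H"
  interpret ZH: normal ?ZH H by (rule H.center_normal)
  interpret ZHs: subgroup ?ZH H by (rule H.center_subgroup)
  define h where "h = (\<lambda>a. ?ZH #>\<^bsub>H\<^esub> f a)"
  have step: "f (a \<otimes>\<^bsub>G\<^esub> b) \<otimes>\<^bsub>H\<^esub> inv\<^bsub>H\<^esub> (f a \<otimes>\<^bsub>H\<^esub> f b) \<in> ?ZH"
    if a: "a \<in> carrier G" and b: "b \<in> carrier G" for a b
  proof (rule H.conj_center)
    show "f (a \<otimes>\<^bsub>G\<^esub> b) \<in> carrier H" "f a \<otimes>\<^bsub>H\<^esub> f b \<in> carrier H" using a b fc by auto
    fix y assume y: "y \<in> carrier H"
    then obtain g where g: "g \<in> carrier G" "y = f g" using im by auto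
    have eqG: "a \<otimes>\<^bsub>G\<^esub> b \<otimes>\<^bsub>G\<^esub> g \<otimes>\<^bsub>G\<^esub> inv\<^bsub>G\<^esub> (a \<otimes>\<^bsub>G\<^esub> b)
        = a \<otimes>\<^bsub>G\<^esub> (b \<otimes>\<^bsub>G\<^esub> g \<otimes>\<^bsub>G\<^esub> inv\<^bsub>G\<^esub> b) \<otimes>\<^bsub>G\<^esub> inv\<^bsub>G\<^esub> a"
      using a b g by (simp add: G.inv_mult_group G.m_assoc)
    have "f (a \<otimes>\<^bsub>G\<^esub> b) \<otimes>\<^bsub>H\<^esub> y \<otimes>\<^bsub>H\<^esub> inv\<^bsub>H\<^esub> f (a \<otimes>\<^bsub>G\<^esub> b)
        = f (a \<otimes>\<^bsub>G\<^esub> b \<otimes>\<^bsub>G\<^esub> g \<otimes>\<^bsub>G\<^esub> inv\<^bsub>G\<^esub> (a \<otimes>\<^bsub>G\<^esub> b))"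
      using fop[of "a \<otimes>\<^bsub>G\<^esub> b" g] a b g by simp
    also have "\<dots> = f (a \<otimes>\<^bsub>G\<^esub> (b \<otimes>\<^bsub>G\<^esub> g \<otimes>\<^bsub>G\<^esub> inv\<^bsub>G\<^esub> b) \<otimes>\<^bsub>G\<^esub> inv\<^bsub>G\<^esub> a)"
      using eqG by (rule arg_cong)
    also have "\<dots> = f a \<otimes>\<^bsub>H\<^esub> (f b \<otimes>\<^bsub>H\<^esub> f g \<otimes>\<^bsub>H\<^esub> inv\<^bsub>H\<^esub> f b) \<otimes>\<^bsub>H\<^esub> inv\<^bsub>H\<^esub> f a"
      using fop[of a "b \<otimes>\<^bsub>G\<^esub> g \<otimes>\<^bsub>G\<^esub> inv\<^bsub>G\<^esub> b"] fop[of b g] a b g by simp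
    also have "\<dots> = (f a \<otimes>\<^bsub>H\<^esub> f b) \<otimes>\<^bsub>H\<^esub> y \<otimes>\<^bsub>H\<^esub> inv\<^bsub>H\<^esub> (f a \<otimes>\<^bsub>H\<^esub> f b)"
      using a b g fc by (simp add: H.inv_mult_group H.m_assoc)
    finally show "f (a \<otimes>\<^bsub>G\<^esub> b) \<otimes>\<^bsub>H\<^esub> y \<otimes>\<^bsub>H\<^esub> inv\<^bsub>H\<^esub> f (a \<otimes>\<^bsub>G\<^esub> b)
        = (f a \<otimes>\<^bsub>H\<^esub> f b) \<otimes>\<^bsub>H\<^esub> y \<otimes>\<^bsub>H\<^esub> inv\<^bsub>H\<^esub> (f a \<otimes>\<^bsub>H\<^esub> f b)" .
  qed
  have hom: "h \<in> hom G (H Mod ?ZH)"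
  proof (rule homI)
    fix a assume "a \<in> carrier G"
    thus "h a \<in> carrier (H Mod ?ZH)" using fc
      by (auto simp: h_def FactGroup_def RCOSETS_def)
  next
    fix a b assume a: "a \<in> carrier G" and b: "b \<in> carrier G"
    let ?c = "f (a \<otimes>\<^bsub>G\<^esub> b) \<otimes>\<^bsub>H\<^esub> inv\<^bsub>H\<^esub> (f a \<otimes>\<^bsub>H\<^esub> f b)"
    have cc: "?c \<in> ?ZH" using step a b .
    have cH: "?c \<in> carrier H" using a b fc by auto
    have "f (a \<otimes>\<^bsub>G\<^esub> b) = ?c \<otimes>\<^bsub>H\<^esub> (f a \<otimes>\<^bsub>H\<^esub> f b)"
      using a b fc by (simp add: H.m_assoc)
    hence "h (a \<otimes>\<^bsub>G\<^esub> b) = (?ZH #>\<^bsub>H\<^esub> ?c) #>\<^bsub>H\<^esub> (f a \<otimes>\<^bsub>H\<^esub> f b)"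
      using a b fc cH by (simp add: h_def H.coset_mult_assoc ZH.subset)
    also have "\<dots> = ?ZH #>\<^bsub>H\<^esub> (f a \<otimes>\<^bsub>H\<^esub> f b)"
      using H.coset_join2[OF cH H.center_subgroup cc] by simp
    also have "\<dots> = h a <#>\<^bsub>H\<^esub> h b" using a b fc by (simp add: h_def ZH.rcos_sum)
    finally show "h (a \<otimes>\<^bsub>G\<^esub> b) = h a \<otimes>\<^bsub>H Mod ?ZH\<^esub> h b" by (simp add: FactGroup_def)
  qed
  have gh: "group_hom G (H Mod ?ZH) h"
    using hom ZH.factorgroup_is_group
    by (simp add: group_hom_def group_hom_axioms_def assms(1))
  have surj: "h ` carrier G = carrier (H Mod ?ZH)"
  proof
    show "h ` carrier G \<subseteq> carrier (H Mod ?ZH)" using fc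
      by (auto simp: h_def FactGroup_def RCOSETS_def)
    show "carrier (H Mod ?ZH) \<subseteq> h ` carrier G"
    proof
      fix S assume "S \<in> carrier (H Mod ?ZH)"
      then obtain y where y: "y \<in> carrier H" "S = ?ZH #>\<^bsub>H\<^esub> y"
        by (auto simp: FactGroup_def RCOSETS_def)
      then obtain g where "g \<in> carrier G" "y = f g" using im by auto
      thus "S \<in> h ` carrier G" using y by (auto simp: h_def)
    qed
  qed
  have ker: "kernel G (H Mod ?ZH) h = ?ZG"
  proof -
    have "a \<in> ?ZG \<longleftrightarrow> f a \<in> ?ZH" if a: "a \<in> carrier G" for a
    proof
      assume "a \<in> ?ZG"
      hence c0: "\<And>g. g \<in> carrier G \<Longrightarrow> a \<otimes>\<^bsub>G\<^esub> g = g \<otimes>\<^bsub>G\<^esub> a"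
        by (simp add: group_center_def)
      have c: "a \<otimes>\<^bsub>G\<^esub> g \<otimes>\<^bsub>G\<^esub> inv\<^bsub>G\<^esub> a = g" if g: "g \<in> carrier G" for g
        using c0[OF g] a g by (simp add: G.m_assoc)
      have "f a \<otimes>\<^bsub>H\<^esub> y = y \<otimes>\<^bsub>H\<^esub> f a" if y: "y \<in> carrier H" for y
      proof -
        obtain g where g: "g \<in> carrier G" "y = f g" using im y by auto
        have "f a \<otimes>\<^bsub>H\<^esub> y \<otimes>\<^bsub>H\<^esub> inv\<^bsub>H\<^esub> f a = f (a \<otimes>\<^bsub>G\<^esub> g \<otimes>\<^bsub>G\<^esub> inv\<^bsub>G\<^esub> a)"
          using fop[OF a g(1)] g(2) by simp
        also have "\<dots> = y" using c[OF g(1)] g(2) by simp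
        finally have "f a \<otimes>\<^bsub>H\<^esub> y \<otimes>\<^bsub>H\<^esub> inv\<^bsub>H\<^esub> f a = y" .
        hence "f a \<otimes>\<^bsub>H\<^esub> y \<otimes>\<^bsub>H\<^esub> inv\<^bsub>H\<^esub> f a \<otimes>\<^bsub>H\<^esub> f a = y \<otimes>\<^bsub>H\<^esub> f a" by simp
        thus ?thesis using fc[OF a] y by (simp add: H.m_assoc)
      qed
      thus "f a \<in> ?ZH" using fc[OF a] unfolding group_center_def by blast
    next
      assume fa: "f a \<in> ?ZH"
      have "a \<otimes>\<^bsub>G\<^esub> g = g \<otimes>\<^bsub>G\<^esub> a" if g: "g \<in> carrier G" for g
      proof -
        have "f a \<otimes>\<^bsub>H\<^esub> f g = f g \<otimes>\<^bsub>H\<^esub> f a" using fa fc[OF g] unfolding group_center_def by blast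
        hence "f (a \<otimes>\<^bsub>G\<^esub> g \<otimes>\<^bsub>G\<^esub> inv\<^bsub>G\<^esub> a) = f g"
          using fop[OF a g] fc[OF a] fc[OF g] by (simp add: H.m_assoc)
        hence "a \<otimes>\<^bsub>G\<^esub> g \<otimes>\<^bsub>G\<^esub> inv\<^bsub>G\<^esub> a = g"
          using inj a g by (auto simp: inj_on_def)
        hence "a \<otimes>\<^bsub>G\<^esub> g \<otimes>\<^bsub>G\<^esub> inv\<^bsub>G\<^esub> a \<otimes>\<^bsub>G\<^esub> a = g \<otimes>\<^bsub>G\<^esub> a" by simp
        thus ?thesis using a g by (simp add: G.m_assoc)
      qed
      thus "a \<in> ?ZG" using a unfolding group_center_def by blast
    qed
    moreover have "h a = \<one>\<^bsub>H Mod ?ZH\<^esub> \<longleftrightarrow> f a \<in> ?ZH" if a: "a \<in> carrier G" for a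
      using H.coset_join1[OF _ fc[OF a] H.center_subgroup] H.coset_join2[OF fc[OF a] H.center_subgroup]
      by (auto simp: h_def FactGroup_def)
    moreover have "?ZG \<subseteq> carrier G" by (simp add: group_center_def)
    ultimately show ?thesis
      unfolding kernel_def by blast
  qed
  show ?thesis using group_hom.FactGroup_iso[OF gh surj] ker by simp
qed

end
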